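(* Let $N\to\infty$ and let $h=h(N)$ satisfy $h\to\infty$ and $h=o(N)$ as $N\to\infty$. Let $f_1,f_2:\mathbb{N}\to\mathbb{R}$ satisfy, for every $\varepsilon>0$, $f_1(n),f_2(n)\ll_{\varepsilon}N^{\varepsilon}$ uniformly for $n\ll N$. Then for every $\varepsilon>0$, $$I_{f_1,f_2}(N,h)=\sum_{a}W(a)\,\mathcal{C}_{f_1,f_2}(a)+O_{\varepsilon}(N^{\varepsilon}h^3),$$ where the sum is over integers $a\in[-2h,2h]$.
   Context: For $r\ne0$, $\mathrm{sgn}(r)=|r|/r$, and $\mathrm{sgn}(0)=0$. The mixed symmetry integral is $$I_{f_1,f_2}(N,h)=\int_h^N\Big(\sum_{|n-x|\le h}f_1(n)\,\mathrm{sgn}(n-x)\Big)\Big(\sum_{|m-x|\le h}f_2(m)\,\mathrm{sgn}(m-x)\Big)\,dx.$$ For integers $a\in[-2h,2h]$, the mixed correlation is $\mathcal{C}_{f_1,f_2}(a)=\sum_{|a|<n\le N-|a|}f_1(n)f_2(n-a)$, and the weight is $W(a)=\max(2h-3|a|,\,|a|-2h)$; $W$ is supported in $[-2h,2h]$. *)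

theory Defs
  imports "HOL-Analysis.Analysis" "HOL-Library.Landau_Symbols"
begin

text \<open>Inner symmetric sum: sum over natural numbers n with |n - x| <= h of f(n) sgn(n - x).
  Isabelle's sgn on reals agrees with the paper's sgn (sgn 0 = 0).\<close>
definition sym_sum :: "(nat \<Rightarrow> real) \<Rightarrow> real \<Rightarrow> real \<Rightarrow> real" where
  "sym_sum f h x = (\<Sum>n\<in>{n::nat. \<bar>real n - x\<bar> \<le> h}. f n * sgn (real n - x))"

definition mixed_sym_integral :: "(nat \<Rightarrow> real) \<Rightarrow> (nat \<Rightarrow> real) \<Rightarrow> nat \<Rightarrow> real \<Rightarrow> real" where
  "mixed_sym_integral f1 f2 N h =
     integral {h..real N} (\<lambda>x. sym_sum f1 h x * sym_sum f2 h x)"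

definition mixed_corr :: "(nat \<Rightarrow> real) \<Rightarrow> (nat \<Rightarrow> real) \<Rightarrow> nat \<Rightarrow> int \<Rightarrow> real" where
  "mixed_corr f1 f2 N a =
     (\<Sum>n\<in>{\<bar>a\<bar> + 1 .. int N - \<bar>a\<bar>}. f1 (nat n) * f2 (nat (n - a)))"

definition weightW :: "real \<Rightarrow> int \<Rightarrow> real" where
  "weightW h a = max (2 * h - 3 * \<bar>real_of_int a\<bar>) (\<bar>real_of_int a\<bar> - 2 * h)"

end

theory Submission
  imports Defs
begin


definition sfun :: "real \<Rightarrow> real \<Rightarrow> real \<Rightarrow> real" where
  "sfun h y x = indicator {y - h..y} x - indicator {y..y + h} x"

lemma sfun_eq: "0 \<le> h \<Longrightarrow> sfun h y x = (if \<bar>y - x\<bar> \<le> h then sgn (y - x) else 0)"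
  by (auto simp: sfun_def indicator_def sgn_if)

definition Lf :: "real \<Rightarrow> real \<Rightarrow> real \<Rightarrow> real \<Rightarrow> real \<Rightarrow> real \<Rightarrow> real" where
  "Lf a b c d h N = max 0 (min (min b d) N - max (max a c) h)"

lemma Lf_int: "((\<lambda>x. indicator {a..b} x * indicator {c..d} x) has_integral Lf a b c d h N) {h..N}"
proof -
  have e: "(\<lambda>x. indicator {a..b} x * indicator {c..d} x) = (\<lambda>x::real. if x \<in> {max a c..min b d} then (1::real) else 0)"
    by (auto simp: indicator_def)
  have s: "{max a c..min b d} \<inter> {h..N} = {max (max a c) h..min (min b d) N}" by auto
  have "((\<lambda>x::real. 1::real) has_integral Lf a b c d h N) {max (max a c) h..min (min b d) N}"
    using has_integral_const_real[of "1::real" "max (max a c) h" "min (min b d) N"]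
    by (auto simp: Lf_def content_real_if max_def)
  then show ?thesis unfolding e has_integral_restrict_Int s .
qed

definition Jr :: "real \<Rightarrow> real \<Rightarrow> real \<Rightarrow> real \<Rightarrow> real" where
  "Jr h N x y = Lf (x-h) x (y-h) y h N - Lf (x-h) x y (y+h) h N - Lf x (x+h) (y-h) y h N + Lf x (x+h) y (y+h) h N"

lemma ss_int: "((\<lambda>t. sfun h x t * sfun h y t) has_integral Jr h N x y) {h..N}"
proof -
  have e: "(\<lambda>t. sfun h x t * sfun h y t) = (\<lambda>t. indicator {x-h..x} t * indicator {y-h..y} t
     - indicator {x-h..x} t * indicator {y..y+h} t - indicator {x..x+h} t * indicator {y-h..y} t
     + indicator {x..x+h} t * indicator {y..y+h} t)"
    by (auto simp: sfun_def algebra_simps)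
  show ?thesis unfolding e Jr_def
    by (intro has_integral_add has_integral_diff Lf_int)
qed

lemma Lf_zero: "min (min b d) N \<le> max (max a c) h \<Longrightarrow> Lf a b c d h N = 0"
  unfolding Lf_def by simp

lemma Jr_far: assumes "\<bar>x - y\<bar> > 2*h" shows "Jr h N x y = 0"
proof -
  have "Lf (x-h) x (y-h) y h N = 0" by (rule Lf_zero) (use assms in \<open>auto simp: max_def min_def abs_if split: if_splits\<close>)
  moreover have "Lf (x-h) x y (y+h) h N = 0" by (rule Lf_zero) (use assms in \<open>auto simp: max_def min_def abs_if split: if_splits\<close>)
  moreover have "Lf x (x+h) (y-h) y h N = 0" by (rule Lf_zero) (use assms in \<open>auto simp: max_def min_def abs_if split: if_splits\<close>)
  moreover have "Lf x (x+h) y (y+h) h N = 0" by (rule Lf_zero) (use assms in \<open>auto simp: max_def min_def abs_if split: if_splits\<close>)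
  ultimately show ?thesis unfolding Jr_def by simp
qed

lemma Jr_right: assumes "0 \<le> h" "x > N + h" shows "Jr h N x y = 0"
proof -
  have "Lf (x-h) x (y-h) y h N = 0" by (rule Lf_zero) (use assms in \<open>auto simp: max_def min_def\<close>)
  moreover have "Lf (x-h) x y (y+h) h N = 0" by (rule Lf_zero) (use assms in \<open>auto simp: max_def min_def\<close>)
  moreover have "Lf x (x+h) (y-h) y h N = 0" by (rule Lf_zero) (use assms in \<open>auto simp: max_def min_def\<close>)
  moreover have "Lf x (x+h) y (y+h) h N = 0" by (rule Lf_zero) (use assms in \<open>auto simp: max_def min_def\<close>)
  ultimately show ?thesis unfolding Jr_def by simp
qed

lemma Lf_le: "a \<le> b \<Longrightarrow> b - a \<le> h \<Longrightarrow> 0 \<le> Lf a b c d h N \<and> Lf a b c d h N \<le> h"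
  unfolding Lf_def by linarith

lemma Jr_bd: assumes "0 \<le> h" shows "\<bar>Jr h N x y\<bar> \<le> 4*h"
proof -
  have "0 \<le> Lf (x-h) x (y-h) y h N \<and> Lf (x-h) x (y-h) y h N \<le> h" by (rule Lf_le) (use assms in auto)
  moreover have "0 \<le> Lf (x-h) x y (y+h) h N \<and> Lf (x-h) x y (y+h) h N \<le> h" by (rule Lf_le) (use assms in auto)
  moreover have "0 \<le> Lf x (x+h) (y-h) y h N \<and> Lf x (x+h) (y-h) y h N \<le> h" by (rule Lf_le) (use assms in auto)
  moreover have "0 \<le> Lf x (x+h) y (y+h) h N \<and> Lf x (x+h) y (y+h) h N \<le> h" by (rule Lf_le) (use assms in auto)
  ultimately show ?thesis unfolding Jr_def by linarith
qed

lemma Jr_mid: assumes "0 \<le> h" "2*h \<le> x" "2*h \<le> y" "x \<le> N - h" "y \<le> N - h" "\<bar>x - y\<bar> \<le> 2*h"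
  shows "Jr h N x y = max (2*h - 3*\<bar>x - y\<bar>) (\<bar>x - y\<bar> - 2*h)"
proof (cases "x \<le> y")
  case True
  have 1: "Lf (x-h) x (y-h) y h N = max 0 (x - y + h)" unfolding Lf_def using assms True by (simp add: max_def min_def)
  have 2: "Lf (x-h) x y (y+h) h N = 0" unfolding Lf_def using assms True by (simp add: max_def min_def)
  have 3: "Lf x (x+h) (y-h) y h N = max 0 (min (x+h) y - max x (y-h))" unfolding Lf_def using assms True by (simp add: max_def min_def)
  have 4: "Lf x (x+h) y (y+h) h N = max 0 (x + h - y)" unfolding Lf_def using assms True by (simp add: max_def min_def)
  show ?thesis unfolding Jr_def 1 2 3 4 using assms True by (simp add: max_def min_def)
next
  case False
  have 1: "Lf (x-h) x (y-h) y h N = max 0 (y - x + h)" unfolding Lf_def using assms False by (simp add: max_def min_def)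
  have 2: "Lf (x-h) x y (y+h) h N = max 0 (min x (y+h) - max (x-h) y)" unfolding Lf_def using assms False by (simp add: max_def min_def)
  have 3: "Lf x (x+h) (y-h) y h N = 0" unfolding Lf_def using assms False by (simp add: max_def min_def)
  have 4: "Lf x (x+h) y (y+h) h N = max 0 (y + h - x)" unfolding Lf_def using assms False by (simp add: max_def min_def)
  show ?thesis unfolding Jr_def 1 2 3 4 using assms False by (simp add: max_def min_def)
qed



lemma sym_sum_eq: assumes "0 \<le> h" "x \<le> real N" "h \<le> real N"
  shows "sym_sum f h x = (\<Sum>n\<in>{..2*N}. f n * sfun h (real n) x)"
proof -
  have sub: "{n::nat. \<bar>real n - x\<bar> \<le> h} \<subseteq> {..2*N}" using assms by auto
  have "(\<Sum>n\<in>{..2*N}. f n * sfun h (real n) x) = (\<Sum>n\<in>{..2*N}. if n \<in> {n::nat. \<bar>real n - x\<bar> \<le> h} then f n * sgn (real n - x) else 0)"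
    by (intro sum.cong) (auto simp: sfun_eq[OF assms(1)])
  also have "\<dots> = (\<Sum>n\<in>{..2*N} \<inter> {n::nat. \<bar>real n - x\<bar> \<le> h}. f n * sgn (real n - x))"
    by (simp add: sum.inter_restrict)
  also have "{..2*N} \<inter> {n::nat. \<bar>real n - x\<bar> \<le> h} = {n::nat. \<bar>real n - x\<bar> \<le> h}" using sub by blast
  finally show ?thesis unfolding sym_sum_def by simp
qed

lemma integral_eq: assumes "0 \<le> h" "h \<le> real N"
  shows "mixed_sym_integral f1 f2 N h = (\<Sum>n\<in>{..2*N}. \<Sum>m\<in>{..2*N}. f1 n * f2 m * Jr h N (real n) (real m))"
proof -
  have "mixed_sym_integral f1 f2 N h = integral {h..real N} (\<lambda>t. \<Sum>n\<in>{..2*N}. \<Sum>m\<in>{..2*N}. f1 n * f2 m * (sfun h (real n) t * sfun h (real m) t))"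
    unfolding mixed_sym_integral_def
  proof (rule integral_cong)
    fix t assume t: "t \<in> {h..real N}"
    have "sym_sum f1 h t * sym_sum f2 h t = (\<Sum>n\<in>{..2*N}. f1 n * sfun h (real n) t) * (\<Sum>m\<in>{..2*N}. f2 m * sfun h (real m) t)"
      using sym_sum_eq[of h t N f1] sym_sum_eq[of h t N f2] t assms by simp
    also have "\<dots> = (\<Sum>n\<in>{..2*N}. \<Sum>m\<in>{..2*N}. f1 n * f2 m * (sfun h (real n) t * sfun h (real m) t))"
      unfolding sum_product by (simp add: mult_ac)
    finally show "sym_sum f1 h t * sym_sum f2 h t = (\<Sum>n\<in>{..2*N}. \<Sum>m\<in>{..2*N}. f1 n * f2 m * (sfun h (real n) t * sfun h (real m) t))" .
  qed
  also have "\<dots> = (\<Sum>n\<in>{..2*N}. \<Sum>m\<in>{..2*N}. f1 n * f2 m * Jr h N (real n) (real m))"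
    by (intro integral_unique has_integral_sum finite_atMost has_integral_mult_right ss_int)
  finally show ?thesis .
qed

lemma card_int_le': "real (card {k::int. a \<le> real_of_int k \<and> real_of_int k \<le> b}) \<le> max 0 (b - a + 1)"
proof -
  have e: "{k::int. a \<le> real_of_int k \<and> real_of_int k \<le> b} = {\<lceil>a\<rceil>..\<lfloor>b\<rfloor>}"
    by (auto simp: ceiling_le_iff le_floor_iff)
  have c: "card {\<lceil>a\<rceil>..\<lfloor>b\<rfloor>} = nat (\<lfloor>b\<rfloor> - \<lceil>a\<rceil> + 1)" by simp
  have f: "real_of_int \<lfloor>b\<rfloor> \<le> b" "a \<le> real_of_int \<lceil>a\<rceil>" by simp_all
  have g: "real (nat z) \<le> max 0 (real_of_int z)" for z :: int by (cases "z \<ge> 0") auto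
  have "real_of_int (\<lfloor>b\<rfloor> - \<lceil>a\<rceil> + 1) \<le> b - a + 1" unfolding of_int_add of_int_diff of_int_1 using f by linarith
  then show ?thesis unfolding e c using g[of "\<lfloor>b\<rfloor> - \<lceil>a\<rceil> + 1"] by linarith
qed

lemma card_nat_le: "real (card {n::nat. a \<le> real n \<and> real n \<le> b}) \<le> max 0 (b - a + 1)"
proof -
  have "card {n::nat. a \<le> real n \<and> real n \<le> b} = card (int ` {n::nat. a \<le> real n \<and> real n \<le> b})"
    by (simp add: card_image)
  also have "\<dots> \<le> card {k::int. a \<le> real_of_int k \<and> real_of_int k \<le> b}"
  proof (rule card_mono)
    have "{k::int. a \<le> real_of_int k \<and> real_of_int k \<le> b} = {\<lceil>a\<rceil>..\<lfloor>b\<rfloor>}"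
      by (auto simp: ceiling_le_iff le_floor_iff)
    then show "finite {k::int. a \<le> real_of_int k \<and> real_of_int k \<le> b}" by simp
  qed auto
  finally show ?thesis using card_int_le'[of a b] by linarith
qed

lemma finite_nat_bd: "finite {n::nat. a \<le> real n \<and> real n \<le> b}"
  by (rule finite_subset[of _ "{..nat \<lceil>b\<rceil>}"]) (auto, linarith)



lemma sum_if_const: "finite A \<Longrightarrow> (\<Sum>x\<in>A. if P x then c else 0) = c * real (card {x\<in>A. P x})"
  by (simp add: sum.inter_filter[symmetric])

lemma card_nat_le2: "a \<le> b + 1 \<Longrightarrow> X \<subseteq> {n::nat. a \<le> real n \<and> real n \<le> b} \<Longrightarrow> real (card X) \<le> b - a + 1"
proof -
  assume 1: "a \<le> b + 1" and 2: "X \<subseteq> {n::nat. a \<le> real n \<and> real n \<le> b}"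
  have "card X \<le> card {n::nat. a \<le> real n \<and> real n \<le> b}" by (rule card_mono[OF finite_nat_bd 2])
  then show ?thesis using card_nat_le[of a b] 1 by linarith
qed

lemma card_int_le2: "a \<le> b + 1 \<Longrightarrow> X \<subseteq> {k::int. a \<le> real_of_int k \<and> real_of_int k \<le> b} \<Longrightarrow> real (card X) \<le> b - a + 1"
proof -
  assume 1: "a \<le> b + 1" and 2: "X \<subseteq> {k::int. a \<le> real_of_int k \<and> real_of_int k \<le> b}"
  have fin: "finite {k::int. a \<le> real_of_int k \<and> real_of_int k \<le> b}"
  proof -
    have "{k::int. a \<le> real_of_int k \<and> real_of_int k \<le> b} = {\<lceil>a\<rceil>..\<lfloor>b\<rfloor>}"
      by (auto simp: ceiling_le_iff le_floor_iff)
    then show ?thesis by simp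
  qed
  have "card X \<le> card {k::int. a \<le> real_of_int k \<and> real_of_int k \<le> b}" by (rule card_mono[OF fin 2])
  then show ?thesis using card_int_le'[of a b] 1 by linarith
qed

lemma A_eq: "{\<lceil>-2 * h\<rceil>..\<lfloor>2 * h\<rfloor>} = {a::int. -2*h \<le> real_of_int a \<and> real_of_int a \<le> 2*h}"
  by (auto simp: ceiling_le_iff le_floor_iff)

lemma weightW_bd: "\<bar>real_of_int a\<bar> \<le> 2*h \<Longrightarrow> \<bar>weightW h a\<bar> \<le> 4*h"
  unfolding weightW_def by (auto simp: max_def)

lemma bound1:
  fixes f1 f2 :: "nat \<Rightarrow> real" and h :: real and N :: nat
  assumes h1: "1 \<le> h" and hN: "8*h \<le> real N"
    and b1: "\<And>n. n \<le> 2*N \<Longrightarrow> \<bar>f1 n\<bar> \<le> B1" and b2: "\<And>n. n \<le> 2*N \<Longrightarrow> \<bar>f2 n\<bar> \<le> B2"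
    and G: "G = {p. \<bar>real (fst p) - real (snd p)\<bar> \<le> 2*h \<and> 4*h \<le> real (fst p) \<and> real (fst p) \<le> real N - 3*h}"
  shows "\<bar>\<Sum>p\<in>({..2*N} \<times> {..2*N}) - G. f1 (fst p) * f2 (snd p) * Jr h N (real (fst p)) (real (snd p))\<bar>
     \<le> 4*h*(B1*B2) * (4*h+1) * (8*h+2)"
proof -
  define S where "S = {..2*N}"
  define c where "c = 4*h*(B1*B2)"
  have B1: "0 \<le> B1" using b1[of 0] by simp
  have B2: "0 \<le> B2" using b2[of 0] by simp
  have c0: "0 \<le> c" using B1 B2 h1 unfolding c_def by simp
  define bad where "bad = (\<lambda>n::nat. real n < 4*h \<or> (real N - 3*h < real n \<and> real n \<le> real N + h))"
  define phi where "phi = (\<lambda>p::nat\<times>nat. if bad (fst p) \<and> \<bar>real (fst p) - real (snd p)\<bar> \<le> 2*h then c else 0)"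
  have fin: "finite (S \<times> S)" unfolding S_def by simp
  have "\<bar>\<Sum>p\<in>(S \<times> S) - G. f1 (fst p) * f2 (snd p) * Jr h N (real (fst p)) (real (snd p))\<bar>
        \<le> (\<Sum>p\<in>(S \<times> S) - G. \<bar>f1 (fst p) * f2 (snd p) * Jr h N (real (fst p)) (real (snd p))\<bar>)"
    by (rule sum_abs)
  also have "\<dots> \<le> (\<Sum>p\<in>(S \<times> S) - G. phi p)"
  proof (rule sum_mono)
    fix p assume p: "p \<in> S \<times> S - G"
    obtain n m where nm: "p = (n, m)" by (cases p)
    show "\<bar>f1 (fst p) * f2 (snd p) * Jr h N (real (fst p)) (real (snd p))\<bar> \<le> phi p"
    proof (cases "\<bar>real n - real m\<bar> > 2*h \<or> real n > real N + h")
      case True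
      then have "Jr h N (real n) (real m) = 0" using Jr_far Jr_right h1 by auto
      then show ?thesis using c0 by (simp add: nm phi_def)
    next
      case False
      then have bd: "bad n" "\<bar>real n - real m\<bar> \<le> 2*h" using p G unfolding bad_def nm by auto
      have "n \<le> 2*N" "m \<le> 2*N" using p nm S_def by auto
      then have q1: "\<bar>f1 n\<bar> * \<bar>f2 m\<bar> \<le> B1 * B2" using b1 b2 B1 by (intro mult_mono) auto
      have q2: "\<bar>Jr h N (real n) (real m)\<bar> \<le> 4*h" using Jr_bd h1 by simp
      have "\<bar>f1 n\<bar> * \<bar>f2 m\<bar> * \<bar>Jr h N (real n) (real m)\<bar> \<le> (B1 * B2) * (4*h)"
        by (rule mult_mono[OF q1 q2]) (use B1 B2 in auto)
      then show ?thesis using bd by (simp add: nm phi_def c_def abs_mult mult_ac)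
    qed
  qed
  also have "\<dots> \<le> (\<Sum>p\<in>S \<times> S. phi p)"
    by (rule sum_mono2[OF fin]) (auto simp: phi_def c0)
  also have "\<dots> = (\<Sum>n\<in>S. \<Sum>m\<in>S. phi (n, m))"
    by (simp add: sum.cartesian_product)
  also have "\<dots> \<le> (\<Sum>n\<in>S. if bad n then c * (4*h+1) else 0)"
  proof (rule sum_mono)
    fix n assume n: "n \<in> S"
    show "(\<Sum>m\<in>S. phi (n, m)) \<le> (if bad n then c * (4*h+1) else 0)"
    proof (cases "bad n")
      case True
      have "(\<Sum>m\<in>S. phi (n, m)) = (\<Sum>m\<in>S. if \<bar>real n - real m\<bar> \<le> 2*h then c else 0)"
        using True by (simp add: phi_def)
      also have "\<dots> = c * real (card {m\<in>S. \<bar>real n - real m\<bar> \<le> 2*h})"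
        by (rule sum_if_const) (simp add: S_def)
      also have "\<dots> \<le> c * (4*h+1)"
      proof (rule mult_left_mono[OF _ c0])
        have "real (card {m\<in>S. \<bar>real n - real m\<bar> \<le> 2*h}) \<le> (real n + 2*h) - (real n - 2*h) + 1"
          using h1 by (intro card_nat_le2) auto
        then show "real (card {m\<in>S. \<bar>real n - real m\<bar> \<le> 2*h}) \<le> 4*h+1" by simp
      qed
      finally show ?thesis using True by simp
    next
      case False then show ?thesis by (simp add: phi_def)
    qed
  qed
  also have "\<dots> = c * (4*h+1) * real (card {n\<in>S. bad n})"
    by (rule sum_if_const) (simp add: S_def)
  also have "\<dots> \<le> c * (4*h+1) * (8*h+2)"
  proof (rule mult_left_mono)
    have sub: "{n\<in>S. bad n} \<subseteq> {n::nat. 0 \<le> real n \<and> real n \<le> 4*h} \<union> {n::nat. real N - 3*h \<le> real n \<and> real n \<le> real N + h}"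
      unfolding bad_def by auto
    have "real (card {n\<in>S. bad n}) \<le> real (card ({n::nat. 0 \<le> real n \<and> real n \<le> 4*h} \<union> {n::nat. real N - 3*h \<le> real n \<and> real n \<le> real N + h}))"
      by (intro of_nat_mono card_mono sub finite_UnI finite_nat_bd)
    also have "\<dots> \<le> real (card {n::nat. 0 \<le> real n \<and> real n \<le> 4*h}) + real (card {n::nat. real N - 3*h \<le> real n \<and> real n \<le> real N + h})"
      unfolding of_nat_add[symmetric] of_nat_le_iff by (rule card_Un_le)
    also have "\<dots> \<le> (4*h - 0 + 1) + ((real N + h) - (real N - 3*h) + 1)"
      using h1 by (intro add_mono card_nat_le2) auto
    finally show "real (card {n\<in>S. bad n}) \<le> 8*h+2" by simp
  qed (use c0 h1 in auto)
  finally show ?thesis unfolding S_def c_def by simp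
qed



lemma finite_int_bd: "finite {k::int. a \<le> real_of_int k \<and> real_of_int k \<le> b}"
proof -
  have "{k::int. a \<le> real_of_int k \<and> real_of_int k \<le> b} = {\<lceil>a\<rceil>..\<lfloor>b\<rfloor>}"
    by (auto simp: ceiling_le_iff le_floor_iff)
  then show ?thesis by simp
qed

lemma bound2:
  fixes f1 f2 :: "nat \<Rightarrow> real" and h :: real and N :: nat
  assumes h1: "1 \<le> h" and hN: "8*h \<le> real N"
    and b1: "\<And>n. n \<le> 2*N \<Longrightarrow> \<bar>f1 n\<bar> \<le> B1" and b2: "\<And>n. n \<le> 2*N \<Longrightarrow> \<bar>f2 n\<bar> \<le> B2"
    and Gp: "Gp = {p. 4*h \<le> real_of_int (snd p) \<and> real_of_int (snd p) \<le> real N - 3*h}"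
  shows "\<bar>\<Sum>p\<in>(SIGMA a:{\<lceil>-2 * h\<rceil>..\<lfloor>2 * h\<rfloor>}. {\<bar>a\<bar> + 1 .. int N - \<bar>a\<bar>}) - Gp.
            weightW h (fst p) * (f1 (nat (snd p)) * f2 (nat (snd p - fst p)))\<bar>
     \<le> (4*h+1) * (4*h*(B1*B2) * (8*h+2))"
proof -
  define A where "A = {\<lceil>-2 * h\<rceil>..\<lfloor>2 * h\<rfloor>}"
  define K where "K = (\<lambda>a::int. {\<bar>a\<bar> + 1 .. int N - \<bar>a\<bar>})"
  define P where "P = Sigma A K"
  define c where "c = 4*h*(B1*B2)"
  define F where "F = (\<lambda>p::int\<times>int. weightW h (fst p) * (f1 (nat (snd p)) * f2 (nat (snd p - fst p))))"
  have B1: "0 \<le> B1" using b1[of 0] by simp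
  have B2: "0 \<le> B2" using b2[of 0] by simp
  have c0: "0 \<le> c" using B1 B2 h1 unfolding c_def by simp
  define bad where "bad = (\<lambda>k::int. real_of_int k < 4*h \<or> real N - 3*h < real_of_int k)"
  define psi where "psi = (\<lambda>p::int\<times>int. if bad (snd p) then c else 0)"
  have finA: "finite A" unfolding A_def by simp
  have finK: "\<And>a. finite (K a)" unfolding K_def by simp
  have fin: "finite P" unfolding P_def using finA finK by simp
  have "\<bar>sum F (P - Gp)\<bar> \<le> (\<Sum>p\<in>P - Gp. \<bar>F p\<bar>)" by (rule sum_abs)
  also have "\<dots> \<le> (\<Sum>p\<in>P - Gp. psi p)"
  proof (rule sum_mono)
    fix p assume p: "p \<in> P - Gp"
    obtain a k where ak: "p = (a, k)" by (cases p)
    have a: "\<bar>real_of_int a\<bar> \<le> 2*h" using p unfolding ak P_def A_def A_eq by auto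
    have k: "\<bar>a\<bar> + 1 \<le> k" "k \<le> int N - \<bar>a\<bar>" using p unfolding ak P_def K_def by auto
    have bd: "bad k" using p Gp unfolding ak bad_def by auto
    have "nat k \<le> 2*N" "nat (k - a) \<le> 2*N" using k by auto
    then have q1: "\<bar>f1 (nat k)\<bar> * \<bar>f2 (nat (k - a))\<bar> \<le> B1 * B2" using b1 b2 B1 by (intro mult_mono) auto
    have q2: "\<bar>weightW h a\<bar> \<le> 4*h" using weightW_bd[OF a] .
    have "\<bar>weightW h a\<bar> * (\<bar>f1 (nat k)\<bar> * \<bar>f2 (nat (k - a))\<bar>) \<le> (4*h) * (B1 * B2)"
      by (rule mult_mono[OF q2 q1]) (use h1 in auto)
    then show "\<bar>F p\<bar> \<le> psi p" using bd by (simp add: ak F_def psi_def c_def abs_mult)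
  qed
  also have "\<dots> \<le> (\<Sum>p\<in>P. psi p)"
    by (rule sum_mono2[OF fin]) (auto simp: psi_def c0)
  also have "\<dots> = (\<Sum>a\<in>A. \<Sum>k\<in>K a. psi (a, k))"
    unfolding P_def by (subst sum.Sigma) (auto simp: finA finK split_def)
  also have "\<dots> \<le> (\<Sum>a\<in>A. c * (8*h+2))"
  proof (rule sum_mono)
    fix a assume "a \<in> A"
    have "(\<Sum>k\<in>K a. psi (a, k)) = (\<Sum>k\<in>K a. if bad k then c else 0)" by (simp add: psi_def)
    also have "\<dots> = c * real (card {k\<in>K a. bad k})" by (rule sum_if_const[OF finK])
    also have "\<dots> \<le> c * (8*h+2)"
    proof (rule mult_left_mono[OF _ c0])
      have sub: "{k\<in>K a. bad k} \<subseteq> {k::int. 0 \<le> real_of_int k \<and> real_of_int k \<le> 4*h} \<union> {k::int. real N - 3*h \<le> real_of_int k \<and> real_of_int k \<le> real N}"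
        unfolding bad_def K_def by auto
      have "real (card {k\<in>K a. bad k}) \<le> real (card ({k::int. 0 \<le> real_of_int k \<and> real_of_int k \<le> 4*h} \<union> {k::int. real N - 3*h \<le> real_of_int k \<and> real_of_int k \<le> real N}))"
        by (intro of_nat_mono card_mono sub finite_UnI finite_int_bd)
      also have "\<dots> \<le> real (card {k::int. 0 \<le> real_of_int k \<and> real_of_int k \<le> 4*h}) + real (card {k::int. real N - 3*h \<le> real_of_int k \<and> real_of_int k \<le> real N})"
        unfolding of_nat_add[symmetric] of_nat_le_iff by (rule card_Un_le)
      also have "\<dots> \<le> (4*h - 0 + 1) + (real N - (real N - 3*h) + 1)"
        using h1 by (intro add_mono card_int_le2) auto
      finally show "real (card {k\<in>K a. bad k}) \<le> 8*h+2" using h1 by simp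
    qed
    finally show "(\<Sum>k\<in>K a. psi (a, k)) \<le> c * (8*h+2)" .
  qed
  also have "\<dots> = real (card A) * (c * (8*h+2))" by simp
  also have "\<dots> \<le> (4*h+1) * (c * (8*h+2))"
  proof (rule mult_right_mono)
    have "real (card A) \<le> 2*h - (-2*h) + 1"
      using h1 by (intro card_int_le2) (auto simp: A_def ceiling_le_iff le_floor_iff)
    then show "real (card A) \<le> 4*h+1" by simp
  qed (use c0 h1 in auto)
  finally show ?thesis unfolding P_def A_def K_def F_def c_def .
qed



lemma bij_lem:
  fixes h :: real and N :: nat
  assumes h1: "1 \<le> h" and hN: "8*h \<le> real N"
    and G: "G = {p. \<bar>real (fst p) - real (snd p)\<bar> \<le> 2*h \<and> 4*h \<le> real (fst p) \<and> real (fst p) \<le> real N - 3*h}"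
    and Gp: "Gp = {p. 4*h \<le> real_of_int (snd p) \<and> real_of_int (snd p) \<le> real N - 3*h}"
  shows "bij_betw (\<lambda>p. (int (fst p) - int (snd p), int (fst p))) ({..2*N} \<times> {..2*N} \<inter> G)
           ((SIGMA a:{\<lceil>-2 * h\<rceil>..\<lfloor>2 * h\<rfloor>}. {\<bar>a\<bar> + 1 .. int N - \<bar>a\<bar>}) \<inter> Gp)"
  unfolding bij_betw_def
proof
  show "inj_on (\<lambda>p. (int (fst p) - int (snd p), int (fst p))) ({..2*N} \<times> {..2*N} \<inter> G)"
    by (auto simp: inj_on_def)
next
  show "(\<lambda>p. (int (fst p) - int (snd p), int (fst p))) ` ({..2*N} \<times> {..2*N} \<inter> G) =
     (SIGMA a:{\<lceil>-2 * h\<rceil>..\<lfloor>2 * h\<rfloor>}. {\<bar>a\<bar> + 1 .. int N - \<bar>a\<bar>}) \<inter> Gp"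
  proof (rule set_eqI, rule iffI)
    fix q assume "q \<in> (\<lambda>p. (int (fst p) - int (snd p), int (fst p))) ` ({..2*N} \<times> {..2*N} \<inter> G)"
    then obtain n m where q: "q = (int n - int m, int n)" and nm: "(n, m) \<in> G" by auto
    have r: "\<bar>real n - real m\<bar> \<le> 2*h" "4*h \<le> real n" "real n \<le> real N - 3*h" using nm G by auto
    have i1': "\<lceil>-2 * h\<rceil> \<le> int n - int m" using r(1) by (simp add: ceiling_le_iff)
    have i2: "int n - int m \<le> \<lfloor>2 * h\<rfloor>" using r(1) by (simp add: le_floor_iff)
    have "real_of_int (\<bar>int n - int m\<bar> + 1) \<le> real_of_int (int n)" using r h1 by simp
    then have i3: "\<bar>int n - int m\<bar> + 1 \<le> int n" by (simp only: of_int_le_iff)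
    have "real_of_int (int n) \<le> real_of_int (int N - \<bar>int n - int m\<bar>)" using r h1 by simp
    then have i4: "int n \<le> int N - \<bar>int n - int m\<bar>" by (simp only: of_int_le_iff)
    show "q \<in> (SIGMA a:{\<lceil>-2 * h\<rceil>..\<lfloor>2 * h\<rfloor>}. {\<bar>a\<bar> + 1 .. int N - \<bar>a\<bar>}) \<inter> Gp"
      unfolding q Gp using i1' i2 i3 i4 r by simp
  next
    fix q assume qin: "q \<in> (SIGMA a:{\<lceil>-2 * h\<rceil>..\<lfloor>2 * h\<rfloor>}. {\<bar>a\<bar> + 1 .. int N - \<bar>a\<bar>}) \<inter> Gp"
    obtain a k where q: "q = (a, k)" by (cases q)
    have a: "-2*h \<le> real_of_int a" "real_of_int a \<le> 2*h" using qin unfolding q by (auto simp: ceiling_le_iff le_floor_iff)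
    have k: "\<bar>a\<bar> + 1 \<le> k" "k \<le> int N - \<bar>a\<bar>" using qin unfolding q by auto
    have g: "4*h \<le> real_of_int k" "real_of_int k \<le> real N - 3*h" using qin Gp unfolding q by auto
    have k0: "0 \<le> k" "0 \<le> k - a" using k by auto
    have e1: "real (nat k) = real_of_int k" "real (nat (k - a)) = real_of_int (k - a)" using k0 by simp_all
    have "(nat k, nat (k - a)) \<in> {..2*N} \<times> {..2*N} \<inter> G"
      unfolding G using k k0 a g e1 by auto
    moreover have "q = (\<lambda>p. (int (fst p) - int (snd p), int (fst p))) (nat k, nat (k - a))"
      using k0 q by simp
    ultimately show "q \<in> (\<lambda>p. (int (fst p) - int (snd p), int (fst p))) ` ({..2*N} \<times> {..2*N} \<inter> G)"
      by (rule image_eqI[rotated])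
  qed
qed



lemma core:
  fixes f1 f2 :: "nat \<Rightarrow> real" and h :: real and N :: nat
  assumes h1: "1 \<le> h" and hN: "8*h \<le> real N"
    and b1: "\<And>n. n \<le> 2*N \<Longrightarrow> \<bar>f1 n\<bar> \<le> B1" and b2: "\<And>n. n \<le> 2*N \<Longrightarrow> \<bar>f2 n\<bar> \<le> B2"
  shows "\<bar>mixed_sym_integral f1 f2 N h - (\<Sum>a\<in>{\<lceil>-2 * h\<rceil>..\<lfloor>2 * h\<rfloor>}. weightW h a * mixed_corr f1 f2 N a)\<bar>
     \<le> 400 * (B1 * B2) * h ^ 3"
proof -
  define S where "S = {..2*N}"
  define G where "G = {p::nat\<times>nat. \<bar>real (fst p) - real (snd p)\<bar> \<le> 2*h \<and> 4*h \<le> real (fst p) \<and> real (fst p) \<le> real N - 3*h}"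
  define Gp where "Gp = {p::int\<times>int. 4*h \<le> real_of_int (snd p) \<and> real_of_int (snd p) \<le> real N - 3*h}"
  define A where "A = {\<lceil>-2 * h\<rceil>..\<lfloor>2 * h\<rfloor>}"
  define K where "K = (\<lambda>a::int. {\<bar>a\<bar> + 1 .. int N - \<bar>a\<bar>})"
  define P where "P = Sigma A K"
  define H where "H = (\<lambda>p::nat\<times>nat. f1 (fst p) * f2 (snd p) * Jr h N (real (fst p)) (real (snd p)))"
  define F where "F = (\<lambda>p::int\<times>int. weightW h (fst p) * (f1 (nat (snd p)) * f2 (nat (snd p - fst p))))"
  have B1: "0 \<le> B1" using b1[of 0] by simp
  have B2: "0 \<le> B2" using b2[of 0] by simp
  have finS: "finite (S \<times> S)" unfolding S_def by simp
  have finP: "finite P" unfolding P_def A_def K_def by simp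
  have I: "mixed_sym_integral f1 f2 N h = sum H (S \<times> S)"
  proof -
    have "mixed_sym_integral f1 f2 N h = (\<Sum>n\<in>{..2*N}. \<Sum>m\<in>{..2*N}. f1 n * f2 m * Jr h (real N) (real n) (real m))"
      by (rule integral_eq) (use h1 hN in auto)
    then show ?thesis by (simp add: S_def H_def sum.cartesian_product split_def)
  qed
  have M: "(\<Sum>a\<in>A. weightW h a * mixed_corr f1 f2 N a) = sum F P"
    unfolding mixed_corr_def sum_distrib_left P_def F_def K_def
    by (subst sum.Sigma) (auto simp: A_def split_def)
  have s1: "sum H (S \<times> S) = sum H (S \<times> S \<inter> G) + sum H (S \<times> S - G)" by (rule sum.Int_Diff[OF finS])
  have s2: "sum F P = sum F (P \<inter> Gp) + sum F (P - Gp)" by (rule sum.Int_Diff[OF finP])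
  have bij: "bij_betw (\<lambda>p. (int (fst p) - int (snd p), int (fst p))) (S \<times> S \<inter> G) (P \<inter> Gp)"
    unfolding S_def P_def A_def K_def by (rule bij_lem[OF h1 hN G_def Gp_def])
  have eq: "sum H (S \<times> S \<inter> G) = sum F (P \<inter> Gp)"
  proof -
    have "sum H (S \<times> S \<inter> G) = (\<Sum>p\<in>S \<times> S \<inter> G. F (int (fst p) - int (snd p), int (fst p)))"
    proof (rule sum.cong[OF refl])
      fix p assume p: "p \<in> S \<times> S \<inter> G"
      obtain n m where nm: "p = (n, m)" by (cases p)
      have r: "\<bar>real n - real m\<bar> \<le> 2*h" "4*h \<le> real n" "real n \<le> real N - 3*h" using p unfolding nm G_def by auto
      have "Jr h N (real n) (real m) = max (2*h - 3*\<bar>real n - real m\<bar>) (\<bar>real n - real m\<bar> - 2*h)"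
        by (rule Jr_mid) (use r h1 in auto)
      also have "\<dots> = weightW h (int n - int m)" unfolding weightW_def by simp
      finally show "H p = F (int (fst p) - int (snd p), int (fst p))"
        unfolding nm H_def F_def by simp
    qed
    also have "\<dots> = sum F (P \<inter> Gp)" by (rule sum.reindex_bij_betw[OF bij])
    finally show ?thesis .
  qed
  have bd1: "\<bar>sum H (S \<times> S - G)\<bar> \<le> 4*h*(B1*B2) * (4*h+1) * (8*h+2)"
    unfolding H_def S_def by (rule bound1[OF h1 hN b1 b2 G_def])
  have bd2: "\<bar>sum F (P - Gp)\<bar> \<le> (4*h+1) * (4*h*(B1*B2) * (8*h+2))"
    unfolding F_def P_def A_def K_def by (rule bound2[OF h1 hN b1 b2 Gp_def])
  have diff: "mixed_sym_integral f1 f2 N h - (\<Sum>a\<in>A. weightW h a * mixed_corr f1 f2 N a)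
      = sum H (S \<times> S - G) - sum F (P - Gp)"
    unfolding I M s1 s2 eq by simp
  have "(4*h+1) * (8*h+2) \<le> 50 * h^2"
  proof -
    have "h \<le> h*h" using h1 by (simp add: mult_le_cancel_left1)
    then have "16*h + 2 \<le> 18*(h*h)" using h1 by linarith
    then show ?thesis by (simp add: power2_eq_square algebra_simps)
  qed
  then have "8*h*(B1*B2) * ((4*h+1) * (8*h+2)) \<le> 8*h*(B1*B2) * (50 * h^2)"
    by (rule mult_left_mono) (use h1 B1 B2 in simp)
  then have "\<bar>sum H (S \<times> S - G) - sum F (P - Gp)\<bar> \<le> 400 * (B1*B2) * h^3"
    using bd1 bd2 by (simp add: power2_eq_square power3_eq_cube algebra_simps) 
  then show ?thesis using diff unfolding A_def by simp
qed



theorem lemma1: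
  fixes h :: "nat \<Rightarrow> real" and f1 f2 :: "nat \<Rightarrow> real"
  assumes h_inf: "filterlim h at_top sequentially"
    and h_small: "h \<in> o(\<lambda>N. real N)"
    and f1_bd: "\<And>\<epsilon> C. \<epsilon> > 0 \<Longrightarrow> C > 0 \<Longrightarrow>
        \<exists>K. \<forall>N::nat. N \<ge> 1 \<longrightarrow> (\<forall>n::nat. real n \<le> C * real N \<longrightarrow> \<bar>f1 n\<bar> \<le> K * real N powr \<epsilon>)"
    and f2_bd: "\<And>\<epsilon> C. \<epsilon> > 0 \<Longrightarrow> C > 0 \<Longrightarrow>
        \<exists>K. \<forall>N::nat. N \<ge> 1 \<longrightarrow> (\<forall>n::nat. real n \<le> C * real N \<longrightarrow> \<bar>f2 n\<bar> \<le> K * real N powr \<epsilon>)"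
  shows "\<forall>\<epsilon>>0. (\<lambda>N. mixed_sym_integral f1 f2 N (h N)
            - (\<Sum>a\<in>{\<lceil>-2 * h N\<rceil>..\<lfloor>2 * h N\<rfloor>}. weightW (h N) a * mixed_corr f1 f2 N a))
         \<in> O(\<lambda>N. real N powr \<epsilon> * h N ^ 3)"
proof (intro allI impI)
  fix \<epsilon> :: real assume e: "\<epsilon> > 0"
  obtain K1 where K1: "\<forall>N::nat. N \<ge> 1 \<longrightarrow> (\<forall>n::nat. real n \<le> 2 * real N \<longrightarrow> \<bar>f1 n\<bar> \<le> K1 * real N powr (\<epsilon>/2))"
    using f1_bd[of "\<epsilon>/2" 2] e by auto
  obtain K2 where K2: "\<forall>N::nat. N \<ge> 1 \<longrightarrow> (\<forall>n::nat. real n \<le> 2 * real N \<longrightarrow> \<bar>f2 n\<bar> \<le> K2 * real N powr (\<epsilon>/2))"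
    using f2_bd[of "\<epsilon>/2" 2] e by auto
  have ev1: "eventually (\<lambda>N. 1 \<le> h N) sequentially" using h_inf by (simp add: filterlim_at_top)
  have ev2: "eventually (\<lambda>N. norm (h N) \<le> (1/8) * norm (real N)) sequentially"
    using landau_o.smallD[OF h_small, of "1/8"] by simp
  have ev3: "eventually (\<lambda>N::nat. 1 \<le> N) sequentially" by (rule eventually_ge_at_top)
  show "(\<lambda>N. mixed_sym_integral f1 f2 N (h N)
            - (\<Sum>a\<in>{\<lceil>-2 * h N\<rceil>..\<lfloor>2 * h N\<rfloor>}. weightW (h N) a * mixed_corr f1 f2 N a))
         \<in> O(\<lambda>N. real N powr \<epsilon> * h N ^ 3)"
  proof (rule bigoI[where c = "400 * (K1 * K2)"])
    show "eventually (\<lambda>N. norm (mixed_sym_integral f1 f2 N (h N)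
            - (\<Sum>a\<in>{\<lceil>-2 * h N\<rceil>..\<lfloor>2 * h N\<rfloor>}. weightW (h N) a * mixed_corr f1 f2 N a))
         \<le> 400 * (K1 * K2) * norm (real N powr \<epsilon> * h N ^ 3)) sequentially"
      using ev1 ev2 ev3
    proof eventually_elim
      case (elim N)
      have hN: "8 * h N \<le> real N" using elim by simp
      have c: "\<bar>mixed_sym_integral f1 f2 N (h N) - (\<Sum>a\<in>{\<lceil>-2 * h N\<rceil>..\<lfloor>2 * h N\<rfloor>}. weightW (h N) a * mixed_corr f1 f2 N a)\<bar>
          \<le> 400 * ((K1 * real N powr (\<epsilon>/2)) * (K2 * real N powr (\<epsilon>/2))) * h N ^ 3"
      proof (rule core[OF elim(1) hN])
        fix n assume "n \<le> 2*N"
        then have "real n \<le> 2 * real N" by simp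
        then show "\<bar>f1 n\<bar> \<le> K1 * real N powr (\<epsilon>/2)" "\<bar>f2 n\<bar> \<le> K2 * real N powr (\<epsilon>/2)"
          using K1 K2 elim(3) by auto
      qed
      have p: "real N powr (\<epsilon>/2) * real N powr (\<epsilon>/2) = real N powr \<epsilon>"
        by (simp add: powr_add[symmetric])
      have "400 * ((K1 * real N powr (\<epsilon>/2)) * (K2 * real N powr (\<epsilon>/2))) * h N ^ 3
          = 400 * (K1 * K2) * (real N powr \<epsilon> * h N ^ 3)"
        using p by (simp add: algebra_simps)
      also have "\<dots> = 400 * (K1 * K2) * norm (real N powr \<epsilon> * h N ^ 3)"
        using elim(1) by simp
      finally have eq: "400 * ((K1 * real N powr (\<epsilon>/2)) * (K2 * real N powr (\<epsilon>/2))) * h N ^ 3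
          = 400 * (K1 * K2) * norm (real N powr \<epsilon> * h N ^ 3)" .
      show ?case using c unfolding eq real_norm_def by assumption
    qed
  qed
qed

end
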